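(* (i) For any $u,v\in\mathcal{L}PSH^*(\mathbb{C}^n)$, \[ c_\infty(u+v)\le c_\infty(\max\{u,v\})\le\min\{c_\infty(u),c_\infty(v)\}. \] (ii) If $u\in\mathcal{L}PSH(\mathbb{C}^n)$ and $v\in\mathcal{L}PSH^*(\mathbb{C}^n)$ satisfy $\limsup_{|z|\to\infty}\frac{u(z)}{v(z)}\le\sigma<\infty$, then $c_\infty(u)\ge\sigma^{-1}c_\infty(v)$.
   Context: $\mathcal{L}PSH(\mathbb{C}^n)$: plurisubharmonic $u$ on $\mathbb{C}^n$ with $\limsup_{|z|\to\infty}u(z)/\log|z|<\infty$; $\mathcal{L}PSH^*(\mathbb{C}^n)$: those with $u(z)\to+\infty$ as $|z|\to\infty$. $g\in L^2(\infty)$ means $\int_{\mathbb{C}^n\setminus K}|g|^2d\lambda<\infty$ for some compact $K$; $c_\infty(u)=\inf\{c>0:e^{-cu}\in L^2(\infty)\}$ (with $\inf\emptyset=+\infty$). *)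

theory Defs
  imports "HOL-Analysis.Analysis"
begin

text \<open>Points of C^n are vectors of type complex ^ 'n (n = CARD('n)); functions take
values in the extended reals (plurisubharmonic functions take values in [-oo, oo)).\<close>

text \<open>Mean value of an ereal function w over the circle theta in [0, 2 pi] -> a + e^{i theta} b,
i.e. the Lebesgue integral of a function bounded above by M (the Sup on the circle),
written out as M - (1/2pi) * integral of the nonnegative function M - w.\<close>
definition circle_mean :: "('a::real_normed_vector \<Rightarrow> ereal) \<Rightarrow> (real \<Rightarrow> 'a) \<Rightarrow> ereal" where
  "circle_mean w \<gamma> =
     (let M = (SUP t\<in>{0..2*pi}. w (\<gamma> t)) in
      M - ereal (1 / (2*pi)) *
        enn2ereal (\<integral>\<^sup>+ t. indicator {0..2*pi} t * e2ennreal (M - w (\<gamma> t)) \<partial>lborel))"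

definition psh :: "(complex ^ 'n \<Rightarrow> ereal) \<Rightarrow> bool" where
  "psh u \<longleftrightarrow>
     (\<forall>z. u z \<noteq> \<infinity>) \<and>
     (\<exists>z. u z \<noteq> -\<infinity>) \<and>
     (\<forall>t. open {z. u z < t}) \<and>
     (\<forall>a b. u a \<le> circle_mean u (\<lambda>\<theta>. a + cis \<theta> *s b))"

definition LPSH :: "(complex ^ 'n \<Rightarrow> ereal) set" where
  "LPSH = {u. psh u \<and> Limsup at_infinity (\<lambda>z. u z / ereal (ln (norm z))) < \<infinity>}"

definition LPSH_star :: "(complex ^ 'n \<Rightarrow> ereal) set" where
  "LPSH_star = {u. u \<in> LPSH \<and> (u \<longlongrightarrow> \<infinity>) at_infinity}"

definition exp_neg :: "real \<Rightarrow> ereal \<Rightarrow> ennreal" where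
  "exp_neg c x = (case x of ereal r \<Rightarrow> ennreal (exp (- c * r)) | PInfty \<Rightarrow> 0 | MInfty \<Rightarrow> \<infinity>)"

definition L2_infty :: "(complex ^ 'n \<Rightarrow> ennreal) \<Rightarrow> bool" where
  "L2_infty g \<longleftrightarrow> (\<exists>K. compact K \<and>
      (\<integral>\<^sup>+ z. indicator (- K) z * (g z)^2 \<partial>lborel) < \<infinity>)"

definition c_infty :: "(complex ^ 'n \<Rightarrow> ereal) \<Rightarrow> ereal" where
  "c_infty u = Inf {ereal c | c. c > 0 \<and> L2_infty (\<lambda>z. exp_neg c (u z))}"

end

theory Submission
  imports Defs
begin

lemma exp_neg_anti:
  assumes "0 \<le> c" "x \<le> y"
  shows "exp_neg c y \<le> exp_neg c x"
  using assms
  by (cases x; cases y) (auto simp: exp_neg_def intro!: ennreal_leI mult_left_mono)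

lemma L2_mono:
  fixes g h :: "complex ^ 'n \<Rightarrow> ennreal"
  assumes ev: "eventually (\<lambda>z. g z \<le> h z) at_infinity" and L: "L2_infty h"
  shows "L2_infty g"
proof -
  obtain R where R: "\<And>z. R \<le> norm z \<Longrightarrow> g z \<le> h z"
    using ev unfolding eventually_at_infinity by blast
  obtain K where K: "compact K" "(\<integral>\<^sup>+ z. indicator (- K) z * (h z)^2 \<partial>lborel) < \<infinity>"
    using L unfolding L2_infty_def by blast
  let ?K = "K \<union> cball 0 R"
  have "compact ?K" using K by auto
  moreover have "(\<integral>\<^sup>+ z. indicator (- ?K) z * (g z)^2 \<partial>lborel)
      \<le> (\<integral>\<^sup>+ z. indicator (- K) z * (h z)^2 \<partial>lborel)"
  proof (rule nn_integral_mono)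
    fix z :: "complex ^ 'n"
    show "indicator (- ?K) z * (g z)^2 \<le> indicator (- K) z * (h z)^2"
    proof (cases "z \<in> ?K")
      case False
      then have "R \<le> norm z" by auto
      then have "(g z)^2 \<le> (h z)^2" using R by (intro power_mono) auto
      then show ?thesis using False by (auto simp: indicator_def)
    qed (auto simp: indicator_def)
  qed
  ultimately show ?thesis using K(2) unfolding L2_infty_def
    by (meson order.strict_trans1)
qed

lemma cinf_mono:
  fixes u v :: "complex ^ 'n \<Rightarrow> ereal"
  assumes ev: "eventually (\<lambda>z. v z \<le> u z) at_infinity"
  shows "c_infty u \<le> c_infty v"
  unfolding c_infty_def
proof (rule Inf_superset_mono, safe)
  fix c :: real
  assume c: "0 < c" "L2_infty (\<lambda>z. exp_neg c (v z))"
  have "L2_infty (\<lambda>z. exp_neg c (u z))"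
    by (rule L2_mono[OF _ c(2)]) (use ev c(1) in \<open>auto elim!: eventually_mono intro: exp_neg_anti\<close>)
  then show "\<exists>c'. ereal c = ereal c' \<and> 0 < c' \<and> L2_infty (\<lambda>z. exp_neg c' (u z))"
    using c by blast
qed

lemma part2:
  fixes u v :: "complex ^ 'n \<Rightarrow> ereal" and \<sigma> :: real
  assumes v: "v \<in> LPSH_star" and s: "0 < \<sigma>"
    and ls: "Limsup at_infinity (\<lambda>z. u z / v z) \<le> ereal \<sigma>"
  shows "c_infty u \<ge> ereal (1 / \<sigma>) * c_infty v"
proof -
  have vinf: "(v \<longlongrightarrow> \<infinity>) at_infinity" using v by (simp add: LPSH_star_def)
  have vnf: "\<And>z. v z \<noteq> \<infinity>" using v by (simp add: LPSH_star_def LPSH_def psh_def)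
  have key: "c_infty v \<le> ereal (c * \<sigma>)"
    if c: "0 < c" "L2_infty (\<lambda>z. exp_neg c (u z))" for c
  proof (rule dense_ge)
    fix y :: ereal assume y: "ereal (c * \<sigma>) < y"
    show "c_infty v \<le> y"
    proof (cases y)
      case (real t)
      define e where "e = t / c - \<sigma>"
      have t: "c * \<sigma> < t" using y real by simp
      have e: "0 < e" using t c(1) unfolding e_def by (simp add: field_simps)
      have te: "t = c * (\<sigma> + e)" using c(1) unfolding e_def by simp
      have ev1: "eventually (\<lambda>z. u z / v z < ereal (\<sigma> + e)) at_infinity"
        by (rule Limsup_lessD) (rule le_less_trans[OF ls], use e in simp)
      have ev2: "eventually (\<lambda>z. ereal 0 < v z) at_infinity"
        using vinf unfolding tendsto_PInfty by blast
      have ev: "eventually (\<lambda>z. exp_neg t (v z) \<le> exp_neg c (u z)) at_infinity"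
        using ev1 ev2
      proof eventually_elim
        case (elim z)
        then obtain r where r: "v z = ereal r" "0 < r" using vnf[of z] by (cases "v z") auto
        show ?case
        proof (cases "u z")
          case (real s')
          have "s' / r < \<sigma> + e" using elim(1) r real by simp
          then have "s' < (\<sigma> + e) * r" using r(2) by (simp add: field_simps)
          then have "c * s' \<le> c * ((\<sigma> + e) * r)" using c(1) by simp
          then have "c * s' \<le> t * r" using te by (simp add: algebra_simps)
          then show ?thesis using r real by (simp add: exp_neg_def)
        next
          case PInf then show ?thesis using elim(1) r by simp
        next
          case MInf then show ?thesis using r by (simp add: exp_neg_def)
        qed
      qed
      have "L2_infty (\<lambda>z. exp_neg t (v z))" by (rule L2_mono[OF ev c(2)])
      moreover have "0 < t" using te c(1) s e by simp
      ultimately show ?thesis unfolding c_infty_def real by (intro Inf_lower) blast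
    qed (use y in auto)
  qed
  show ?thesis unfolding c_infty_def[of u]
  proof (rule Inf_greatest, safe)
    fix c assume c: "0 < c" "L2_infty (\<lambda>z. exp_neg c (u z))"
    have "ereal (1 / \<sigma>) * c_infty v \<le> ereal (1 / \<sigma>) * ereal (c * \<sigma>)"
      by (rule ereal_mult_left_mono[OF key[OF c]]) (use s in simp)
    also have "\<dots> = ereal c" using s by simp
    finally show "ereal (1 / \<sigma>) * c_infty v \<le> ereal c" .
  qed
qed

theorem proposition5p1:
  shows "(\<forall>(u::complex^'n \<Rightarrow> ereal) v. u \<in> LPSH_star \<and> v \<in> LPSH_star \<longrightarrow>
           c_infty (\<lambda>z. u z + v z) \<le> c_infty (\<lambda>z. max (u z) (v z)) \<and>
           c_infty (\<lambda>z. max (u z) (v z)) \<le> min (c_infty u) (c_infty v))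
       \<and> (\<forall>(u::complex^'n \<Rightarrow> ereal) v (\<sigma>::real).
           u \<in> LPSH \<and> v \<in> LPSH_star \<and> 0 < \<sigma> \<and>
           Limsup at_infinity (\<lambda>z. u z / v z) \<le> ereal \<sigma> \<longrightarrow>
           c_infty u \<ge> ereal (1 / \<sigma>) * c_infty v)"
proof (intro conjI allI impI)
  fix u v :: "complex ^ 'n \<Rightarrow> ereal"
  assume uv: "u \<in> LPSH_star \<and> v \<in> LPSH_star"
  have e1: "eventually (\<lambda>z. ereal 0 < u z) at_infinity"
    using uv unfolding LPSH_star_def tendsto_PInfty by blast
  have e2: "eventually (\<lambda>z. ereal 0 < v z) at_infinity"
    using uv unfolding LPSH_star_def tendsto_PInfty by blast
  have "eventually (\<lambda>z. max (u z) (v z) \<le> u z + v z) at_infinity"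
    using e1 e2
  proof eventually_elim
    case (elim z)
    then show ?case
      by (cases "u z"; cases "v z") (auto simp: max_def)
  qed
  then show "c_infty (\<lambda>z. u z + v z) \<le> c_infty (\<lambda>z. max (u z) (v z))"
    by (rule cinf_mono)
  have "c_infty (\<lambda>z. max (u z) (v z)) \<le> c_infty u" by (rule cinf_mono) auto
  moreover have "c_infty (\<lambda>z. max (u z) (v z)) \<le> c_infty v" by (rule cinf_mono) auto
  ultimately show "c_infty (\<lambda>z. max (u z) (v z)) \<le> min (c_infty u) (c_infty v)" by simp
next
  fix u v :: "complex ^ 'n \<Rightarrow> ereal" and \<sigma> :: real
  assume "u \<in> LPSH \<and> v \<in> LPSH_star \<and> 0 < \<sigma> \<and> Limsup at_infinity (\<lambda>z. u z / v z) \<le> ereal \<sigma>"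
  then show "c_infty u \<ge> ereal (1 / \<sigma>) * c_infty v" using part2 by blast
qed

end
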